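(* The class $\mathcal K_\omega^*$ has the expansion property relative to the class $\mathcal K_\omega$.
   Context: Expansion property: let $L\subseteq L^*$ be relational languages, $\mathcal K$ a class of finite $L$-structures and $\mathcal K^*$ a class of finite $L^*$-structures whose $L$-reducts lie in $\mathcal K$. $\mathcal K^*$ has the expansion property relative to $\mathcal K$ if for every $\mathbf A\in\mathcal K$ there is $\mathbf B\in\mathcal K$ such that for all $\mathbf A^*,\mathbf B^*\in\mathcal K^*$ whose $L$-reducts are $\mathbf A$ and $\mathbf B$ respectively, $\mathbf A^*$ embeds into $\mathbf B^*$. A directed graph $(A,E)$ ($E$ irreflexive and asymmetric) is complete multipartite if the relation "$u=v$, or neither $E(u,v)$ nor $E(v,u)$" is an equivalence relation on $A$; its classes are called the parts. $\mathcal K_\omega$ is the class of all finite complete multipartite directed graphs (any finite number of parts), i.e. the age of the generic complete $\omega$-partite directed graph $\omega*I_\omega$. $\mathcal K_\omega^*$ is the class of finite structures $(A,E,<)$ where $(A,E)\in\mathcal K_\omega$ and $<$ is a linear order on $A$ for which every part is an interval. *)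

theory Defs
  imports Main
begin

definition digraph :: "'a set \<Rightarrow> ('a \<times> 'a) set \<Rightarrow> bool" where
  "digraph V E \<longleftrightarrow> finite V \<and> E \<subseteq> V \<times> V
     \<and> (\<forall>u. (u, u) \<notin> E) \<and> (\<forall>u v. (u, v) \<in> E \<longrightarrow> (v, u) \<notin> E)"

definition same_part :: "'a set \<Rightarrow> ('a \<times> 'a) set \<Rightarrow> ('a \<times> 'a) set" where
  "same_part V E = {(u, v). u \<in> V \<and> v \<in> V \<and> (u = v \<or> ((u, v) \<notin> E \<and> (v, u) \<notin> E))}"

text \<open>The class K_omega: finite complete multipartite directed graphs.\<close>
definition K_omega :: "'a set \<Rightarrow> ('a \<times> 'a) set \<Rightarrow> bool" where
  "K_omega V E \<longleftrightarrow> digraph V E \<and> equiv V (same_part V E)"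

definition strict_linear_order_on :: "'a set \<Rightarrow> ('a \<times> 'a) set \<Rightarrow> bool" where
  "strict_linear_order_on V R \<longleftrightarrow> R \<subseteq> V \<times> V \<and> (\<forall>u. (u, u) \<notin> R) \<and> trans R
     \<and> (\<forall>u\<in>V. \<forall>v\<in>V. u \<noteq> v \<longrightarrow> (u, v) \<in> R \<or> (v, u) \<in> R)"

text \<open>The class K_omega^*: expansions by a linear order in which every part is an interval.\<close>
definition K_omega_star :: "'a set \<Rightarrow> ('a \<times> 'a) set \<Rightarrow> ('a \<times> 'a) set \<Rightarrow> bool" where
  "K_omega_star V E R \<longleftrightarrow> K_omega V E \<and> strict_linear_order_on V R
     \<and> (\<forall>P \<in> V // same_part V E. \<forall>u\<in>P. \<forall>w\<in>P. \<forall>v\<in>V.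
           (u, v) \<in> R \<and> (v, w) \<in> R \<longrightarrow> v \<in> P)"

definition embedding ::
  "('a \<Rightarrow> 'b) \<Rightarrow> 'a set \<Rightarrow> ('a \<times> 'a) set \<Rightarrow> ('a \<times> 'a) set
     \<Rightarrow> 'b set \<Rightarrow> ('b \<times> 'b) set \<Rightarrow> ('b \<times> 'b) set \<Rightarrow> bool" where
  "embedding f V E R V' E' R' \<longleftrightarrow> inj_on f V \<and> f ` V \<subseteq> V'
     \<and> (\<forall>u\<in>V. \<forall>v\<in>V. (u, v) \<in> E \<longleftrightarrow> (f u, f v) \<in> E')
     \<and> (\<forall>u\<in>V. \<forall>v\<in>V. (u, v) \<in> R \<longleftrightarrow> (f u, f v) \<in> R')"

text \<open>Expansion property of K^* (structures (V,E,R)) relative to K (structures (V,E));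
  the L-reduct of (V,E,R) is (V,E).\<close>
definition expansion_property ::
  "('a set \<Rightarrow> ('a \<times> 'a) set \<Rightarrow> bool)
     \<Rightarrow> ('a set \<Rightarrow> ('a \<times> 'a) set \<Rightarrow> ('a \<times> 'a) set \<Rightarrow> bool) \<Rightarrow> bool" where
  "expansion_property K Kstar \<longleftrightarrow>
     (\<forall>A EA. K A EA \<longrightarrow> (\<exists>B EB. K B EB \<and>
        (\<forall>RA RB. Kstar A EA RA \<and> Kstar B EB RB \<longrightarrow>
           (\<exists>f. embedding f A EA RA B EB RB))))"

end

theory Submission
  imports Defs "HOL-Library.Ramsey" "HOL-Library.Countable"
begin

definition rk :: "'a set \<Rightarrow> ('a \<times> 'a) set \<Rightarrow> 'a \<Rightarrow> nat" where
  "rk X R x = card {y\<in>X. (y, x) \<in> R}"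

locale slo =
  fixes X :: "'a set" and R :: "('a \<times> 'a) set"
  assumes fin: "finite X" and tr: "trans R" and irr: "\<And>x. x \<in> X \<Longrightarrow> (x, x) \<notin> R"
    and tot: "\<And>x y. x \<in> X \<Longrightarrow> y \<in> X \<Longrightarrow> x \<noteq> y \<Longrightarrow> (x, y) \<in> R \<or> (y, x) \<in> R"
begin

lemma rk_less: assumes "x \<in> X" "y \<in> X" "(x, y) \<in> R" shows "rk X R x < rk X R y"
proof -
  have "{z\<in>X. (z, x) \<in> R} \<subset> {z\<in>X. (z, y) \<in> R}"
    using assms tr irr unfolding trans_def by blast
  then show ?thesis unfolding rk_def using fin by (simp add: psubset_card_mono)
qed

lemma rk_iff: assumes "x \<in> X" "y \<in> X" shows "(x, y) \<in> R \<longleftrightarrow> rk X R x < rk X R y"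
  using rk_less[of x y] rk_less[of y x] assms tot[of x y] by fastforce

lemma rk_inj: "inj_on (rk X R) X"
  by (rule inj_onI) (metis rk_iff less_irrefl tot)

lemma rk_bound: assumes "x \<in> X" shows "rk X R x < card X"
proof -
  have "{y\<in>X. (y, x) \<in> R} \<subseteq> X - {x}" using irr by auto
  then have "rk X R x \<le> card (X - {x})" unfolding rk_def using fin by (simp add: card_mono)
  also have "\<dots> < card X" by (rule card_Diff1_less[OF fin assms])
  finally show ?thesis .
qed

lemma rk_image: "rk X R ` X = {..<card X}"
proof -
  have "rk X R ` X \<subseteq> {..<card X}" using rk_bound by auto
  moreover have "card (rk X R ` X) = card {..<card X}" using card_image[OF rk_inj] by simp
  ultimately show ?thesis by (simp add: card_subset_eq)
qed

end

lemma mult_add_less_iff: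
  fixes q1 q2 r1 r2 G :: nat
  assumes "r1 < G" "r2 < G"
  shows "q1 * G + r1 < q2 * G + r2 \<longleftrightarrow> q1 < q2 \<or> (q1 = q2 \<and> r1 < r2)"
proof (cases "q1 < q2")
  case True
  then have "q1 * G + r1 < (q1 + 1) * G" using assms by simp
  also have "\<dots> \<le> q2 * G" using True by (intro mult_le_mono1) simp
  finally show ?thesis using True by simp
next
  case False
  then have "q2 * G \<le> q1 * G" by (intro mult_le_mono1) simp
  show ?thesis
  proof (cases "q1 = q2")
    case True then show ?thesis by simp
  next
    case False
    then have "q2 < q1" using \<open>\<not> q1 < q2\<close> by simp
    then have "q2 * G + r2 < (q2 + 1) * G" using assms by simp
    also have "\<dots> \<le> q1 * G" using \<open>q2 < q1\<close> by (intro mult_le_mono1) simp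
    finally show ?thesis using \<open>q2 < q1\<close> by simp
  qed
qed

lemma sorted_list_of_set_strict_mono:
  fixes g :: "nat \<Rightarrow> nat"
  assumes "\<And>i j. i < j \<Longrightarrow> j < m \<Longrightarrow> g i < g j"
  shows "sorted_list_of_set (g ` {..<m}) = map g [0..<m]"
proof (rule sorted_distinct_set_unique)
  have "sorted_wrt (<) (map g [0..<m])"
    unfolding sorted_wrt_map by (rule sorted_wrt_mono_rel[of _ "(<)"]) (auto intro: assms)
  then show "sorted (map g [0..<m])" "distinct (map g [0..<m])" by (auto simp: strict_sorted_iff)
qed (auto simp: atLeast0LessThan)

lemma Komega_SP_iff:
  assumes "u \<in> V" "v \<in> V"
  shows "(u, v) \<in> same_part V E \<longleftrightarrow> u = v \<or> ((u, v) \<notin> E \<and> (v, u) \<notin> E)"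
  using assms unfolding same_part_def by auto

lemma Komega_noE:
  assumes "K_omega V E" "(u, v) \<in> same_part V E"
  shows "(u, v) \<notin> E"
  using assms unfolding K_omega_def digraph_def same_part_def by auto

lemma Komega_E:
  assumes "u \<in> V" "v \<in> V" "(u, v) \<notin> same_part V E"
  shows "(u, v) \<in> E \<or> (v, u) \<in> E"
  using assms unfolding same_part_def by auto

lemma Komega_equiv: "K_omega V E \<Longrightarrow> equiv V (same_part V E)"
  unfolding K_omega_def by simp

lemma Kstar_conv:
  assumes K: "K_omega_star V E R"
    and xx: "(x, x') \<in> same_part V E" and yy: "(y, y') \<in> same_part V E"
    and xy: "(x, y) \<notin> same_part V E" and r: "(x, y) \<in> R"
  shows "(x', y') \<in> R"
proof -
  let ?S = "same_part V E"
  have eq: "equiv V ?S" using K unfolding K_omega_star_def K_omega_def by simp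
  have lo: "strict_linear_order_on V R" using K unfolding K_omega_star_def by simp
  have cv: "\<forall>P \<in> V // ?S. \<forall>u\<in>P. \<forall>w\<in>P. \<forall>v\<in>V. (u, v) \<in> R \<and> (v, w) \<in> R \<longrightarrow> v \<in> P"
    using K unfolding K_omega_star_def by (elim conjE)
  have V: "x \<in> V" "x' \<in> V" "y \<in> V" "y' \<in> V" using xx yy unfolding same_part_def by auto
  have P: "?S `` {x} \<in> V // ?S" using V by (intro quotientI)
  have Q: "?S `` {y} \<in> V // ?S" using V by (intro quotientI)
  have symS: "sym ?S" and trS: "trans ?S" using eq by (simp_all add: equiv_def)
  have inP: "x \<in> ?S `` {x}" "x' \<in> ?S `` {x}" using xx equiv_class_self[OF eq V(1)] by simp_all
  have inQ: "y \<in> ?S `` {y}" "y' \<in> ?S `` {y}" using yy equiv_class_self[OF eq V(3)] by simp_all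
  have notQ: "x \<notin> ?S `` {y}" using xy symS by (auto dest: symD)
  have notP: "y' \<notin> ?S `` {x}"
  proof
    assume "y' \<in> ?S `` {x}"
    then have "(x, y') \<in> ?S" by simp
    moreover have "(y', y) \<in> ?S" using yy symS by (rule symD[rotated])
    ultimately have "(x, y) \<in> ?S" using trS by (rule transD[rotated])
    then show False using xy by simp
  qed
  have "x' \<noteq> y'" "x \<noteq> y'" using notP inP by auto
  have tot: "\<forall>u\<in>V. \<forall>v\<in>V. u \<noteq> v \<longrightarrow> (u, v) \<in> R \<or> (v, u) \<in> R"
    using lo unfolding strict_linear_order_on_def by (elim conjE)
  have cQ: "(y', x) \<in> R \<and> (x, y) \<in> R \<longrightarrow> x \<in> ?S `` {y}"
    using bspec[OF cv Q] inQ V(1) by blast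
  have cP: "(x, y') \<in> R \<and> (y', x') \<in> R \<longrightarrow> y' \<in> ?S `` {x}"
    using bspec[OF cv P] inP V(4) by blast
  show ?thesis
  proof (rule ccontr)
    assume "(x', y') \<notin> R"
    then have yx': "(y', x') \<in> R" using tot \<open>x' \<noteq> y'\<close> V by blast
    have "(y', x) \<in> R \<or> (x, y') \<in> R" using tot \<open>x \<noteq> y'\<close> V by blast
    then show False
    proof
      assume "(y', x) \<in> R"
      then have "x \<in> ?S `` {y}" using cQ r by blast
      then show False using notQ by simp
    next
      assume "(x, y') \<in> R"
      then have "y' \<in> ?S `` {x}" using cP yx' by blast
      then show False using notP by simp
    qed
  qed
qed


type_synonym vtx = "nat \<times> nat \<times> nat list"

locale cons =
  fixes A :: "nat set" and EA :: "(nat \<times> nat) set" and N :: nat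
  assumes KA: "K_omega A EA"
begin

abbreviation "SPA \<equiv> same_part A EA"
definition "n = card A"
definition "cls u = SPA `` {u}"
definition "rep u = Min (cls u)"
definition "Reps = rep ` A"
definition "k = card Reps"
definition "eix u = rk A {(x, y). x < y} u"
definition "dcond l xs ys \<longleftrightarrow> ys ! (2 * eix l) < xs ! (2 * eix l) \<and> xs ! (2 * eix l + 1) < ys ! (2 * eix l + 1)"
definition "ok w xs ys \<longleftrightarrow> (\<exists>!l. l \<in> cls w \<and> dcond l xs ys)"
definition "dec w xs ys = (THE l. l \<in> cls w \<and> dcond l xs ys)"
definition Carr :: "vtx set" where
  "Carr = {(c, w, xs). c < k \<and> w \<in> A \<and> length xs = 2 * n \<and> set xs \<subseteq> {..<N}}"
fun edg :: "vtx \<Rightarrow> vtx \<Rightarrow> bool" where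
  "edg (c, w, xs) (c', w', ys) \<longleftrightarrow> c \<noteq> c' \<and>
     (if (w, w') \<notin> SPA \<and> ok w xs ys \<and> ok w' ys xs then (dec w xs ys, dec w' ys xs) \<in> EA else c < c')"
definition "Bv = to_nat ` Carr"
definition "EBv = {(a, b). a \<in> Bv \<and> b \<in> Bv \<and> edg (from_nat a) (from_nat b)}"

lemma eqA: "equiv A SPA" using KA by (rule Komega_equiv)
lemma finA: "finite A" using KA unfolding K_omega_def digraph_def by simp
lemma EA_asym: "(u, v) \<in> EA \<Longrightarrow> (v, u) \<notin> EA" using KA unfolding K_omega_def digraph_def by blast
lemma EA_sub: "EA \<subseteq> A \<times> A" using KA unfolding K_omega_def digraph_def by blast

lemma cls_sub: "cls w \<subseteq> A" unfolding cls_def same_part_def by auto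
lemma cls_self: "w \<in> A \<Longrightarrow> w \<in> cls w" unfolding cls_def by (rule equiv_class_self[OF eqA])
lemma SPA_sym: "(u, v) \<in> SPA \<Longrightarrow> (v, u) \<in> SPA" using eqA unfolding equiv_def by (blast dest: symD)
lemma SPA_trans: "(u, v) \<in> SPA \<Longrightarrow> (v, w) \<in> SPA \<Longrightarrow> (u, w) \<in> SPA"
  using eqA unfolding equiv_def by (blast dest: transD)

lemma dec_in: "ok w xs ys \<Longrightarrow> dec w xs ys \<in> cls w \<and> dcond (dec w xs ys) xs ys"
  unfolding ok_def dec_def by (rule theI')

lemma cls_apart:
  assumes "(w, w') \<notin> SPA" "d \<in> cls w" "d' \<in> cls w'"
  shows "(d, d') \<notin> SPA"
proof
  assume "(d, d') \<in> SPA"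
  moreover have "(w, d) \<in> SPA" "(d', w') \<in> SPA" using assms SPA_sym unfolding cls_def by auto
  ultimately have "(w, w') \<in> SPA" using SPA_trans by blast
  then show False using assms by simp
qed

lemma edg_irr: "\<not> edg x x" by (cases x) auto

lemma edg_fst: "edg x y \<Longrightarrow> fst x \<noteq> fst y" by (cases x; cases y) auto

lemma edg_asym: "edg x y \<Longrightarrow> \<not> edg y x"
proof (cases x; cases y)
  fix c w xs c' w' ys assume xy: "x = (c, w, xs)" "y = (c', w', ys)" and e: "edg x y"
  have sym: "(w, w') \<notin> SPA \<longleftrightarrow> (w', w) \<notin> SPA" using SPA_sym by blast
  show "\<not> edg y x"
    using e EA_asym unfolding xy by (auto simp: sym split: if_splits)
qed

lemma edg_total:
  assumes "x \<in> Carr" "y \<in> Carr" "fst x \<noteq> fst y"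
  shows "edg x y \<or> edg y x"
proof (cases x; cases y)
  fix c w xs c' w' ys assume xy: "x = (c, w, xs)" "y = (c', w', ys)"
  have wA: "w \<in> A" "w' \<in> A" using assms unfolding xy Carr_def by auto
  have sym: "(w, w') \<notin> SPA \<longleftrightarrow> (w', w) \<notin> SPA" using SPA_sym by blast
  show ?thesis
  proof (cases "(w, w') \<notin> SPA \<and> ok w xs ys \<and> ok w' ys xs")
    case True
    let ?d = "dec w xs ys" and ?d' = "dec w' ys xs"
    have d: "?d \<in> cls w" "?d' \<in> cls w'" using True dec_in by auto
    then have "(?d, ?d') \<notin> SPA" using True cls_apart by blast
    moreover have "?d \<in> A" "?d' \<in> A" using d cls_sub by auto
    ultimately have "(?d, ?d') \<in> EA \<or> (?d', ?d) \<in> EA" by (rule Komega_E[rotated 2])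
    then show ?thesis using True assms unfolding xy by (auto simp: sym)
  next
    case False
    then show ?thesis using assms unfolding xy by (auto simp: sym)
  qed
qed

lemma finite_Carr: "finite Carr"
proof -
  have "Carr \<subseteq> {..<k} \<times> A \<times> {xs. set xs \<subseteq> {..<N} \<and> length xs = 2 * n}"
    unfolding Carr_def by auto
  moreover have "finite ({..<k} \<times> A \<times> {xs. set xs \<subseteq> {..<N} \<and> length xs = 2 * n})"
    using finA by (intro finite_cartesian_product finite_lists_length_eq) auto
  ultimately show ?thesis by (rule finite_subset)
qed

lemma fromB: "a \<in> Bv \<Longrightarrow> from_nat a \<in> Carr \<and> to_nat (from_nat a :: vtx) = a"
  unfolding Bv_def by auto

lemma SPB: "same_part Bv EBv = {(a, b). a \<in> Bv \<and> b \<in> Bv \<and> fst (from_nat a :: vtx) = fst (from_nat b :: vtx)}"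
proof -
  have "a \<in> Bv \<Longrightarrow> b \<in> Bv \<Longrightarrow> (a = b \<or> ((a, b) \<notin> EBv \<and> (b, a) \<notin> EBv)) \<longleftrightarrow>
      fst (from_nat a :: vtx) = fst (from_nat b :: vtx)" for a b
    using edg_total[of "from_nat a" "from_nat b"] fromB edg_fst[of "from_nat a" "from_nat b"]
      edg_fst[of "from_nat b" "from_nat a"]
    unfolding EBv_def by auto
  then show ?thesis unfolding same_part_def by auto
qed

lemma K_B: "K_omega Bv EBv"
proof -
  have "digraph Bv EBv"
    unfolding digraph_def
  proof (intro conjI allI impI)
    show "finite Bv" unfolding Bv_def using finite_Carr by simp
    show "EBv \<subseteq> Bv \<times> Bv" unfolding EBv_def by auto
    show "(u, u) \<notin> EBv" for u unfolding EBv_def using edg_irr by auto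
    show "(v, u) \<notin> EBv" if "(u, v) \<in> EBv" for u v using that edg_asym unfolding EBv_def by auto
  qed
  moreover have "equiv Bv (same_part Bv EBv)"
    unfolding SPB by (rule equivI) (auto simp: refl_on_def sym_def trans_def)
  ultimately show ?thesis unfolding K_omega_def by simp
qed

end


context cons begin
definition "G = n * n + 1"
definition "Kw = (2 * n + 3) * G"
definition "M = 2 * n * Kw"
end

locale emb = cons +
  fixes RA RB
  assumes KsA: "K_omega_star A EA RA" and KsB: "K_omega_star Bv EBv RB"
    and nA: "A \<noteq> {}"
    and Ram: "partn_lst {..<N} (replicate (card (Pow A)) M) (4 * n)"
begin

lemma npos: "0 < n" using nA finA unfolding n_def by (simp add: card_gt_0_iff)

lemma loA: "strict_linear_order_on A RA" using KsA unfolding K_omega_star_def by simp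
lemma loB: "strict_linear_order_on Bv RB" using KsB unfolding K_omega_star_def by simp

lemma slo_sub:
  assumes "strict_linear_order_on V R" "X \<subseteq> V" "finite X"
  shows "slo X R"
  using assms unfolding strict_linear_order_on_def slo_def by blast

lemma slo_conv:
  assumes "strict_linear_order_on V R" "finite V"
  shows "slo V (R\<inverse>)"
  using assms unfolding strict_linear_order_on_def slo_def trans_def by blast

lemma cls_eq: "(u, v) \<in> SPA \<Longrightarrow> cls u = cls v"
  unfolding cls_def using eqA by (rule equiv_class_eq)

lemma rep_in: "u \<in> A \<Longrightarrow> rep u \<in> cls u \<and> rep u \<in> A"
proof -
  assume u: "u \<in> A"
  have "finite (cls u)" using finA cls_sub finite_subset by blast
  moreover have "cls u \<noteq> {}" using cls_self[OF u] by blast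
  ultimately have "rep u \<in> cls u" unfolding rep_def by (rule Min_in)
  then show ?thesis using cls_sub by blast
qed

lemma SPA_rep: "u \<in> A \<Longrightarrow> (u, rep u) \<in> SPA"
  using rep_in unfolding cls_def by blast

lemma rep_eq_iff: "u \<in> A \<Longrightarrow> v \<in> A \<Longrightarrow> rep u = rep v \<longleftrightarrow> (u, v) \<in> SPA"
proof
  assume "u \<in> A" "v \<in> A" "rep u = rep v"
  then show "(u, v) \<in> SPA" using SPA_rep[of u] SPA_rep[of v] SPA_sym SPA_trans by metis
next
  assume "(u, v) \<in> SPA"
  then show "rep u = rep v" unfolding rep_def using cls_eq by simp
qed

lemma SPA_A: "(u, v) \<in> SPA \<Longrightarrow> u \<in> A \<and> v \<in> A" unfolding same_part_def by auto

lemma RA_rep: "u \<in> A \<Longrightarrow> v \<in> A \<Longrightarrow> (u, v) \<notin> SPA \<Longrightarrow> (u, v) \<in> RA \<longleftrightarrow> (rep u, rep v) \<in> RA"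
proof -
  assume uv: "u \<in> A" "v \<in> A" "(u, v) \<notin> SPA"
  have r: "(u, rep u) \<in> SPA" "(v, rep v) \<in> SPA" using SPA_rep uv by auto
  have r': "(rep u, u) \<in> SPA" "(rep v, v) \<in> SPA" using r SPA_sym by auto
  have "(rep u, rep v) \<notin> SPA"
    using uv r r' SPA_trans by metis
  then show ?thesis using Kstar_conv[OF KsA] r r' uv(3) by metis
qed

lemma finReps: "finite Reps" unfolding Reps_def using finA by simp
lemma sloR: "slo Reps RA"
  by (rule slo_sub[OF loA _ finReps]) (auto simp: Reps_def rep_in)

definition "rkA = rk Reps RA"

lemma rkA_img: "rkA ` Reps = {..<k}"
  unfolding rkA_def k_def by (rule slo.rk_image[OF sloR])


lemma Ram_hom:
  assumes "f \<in> nsets {..<N} (4 * n) \<rightarrow> {..<card (Pow A)}"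
  shows "\<exists>H i. H \<subseteq> {..<N} \<and> finite H \<and> card H = M \<and> f ` nsets H (4 * n) \<subseteq> {i}"
proof -
  obtain i H where "i < length (replicate (card (Pow A)) M)"
      "H \<in> nsets {..<N} (replicate (card (Pow A)) M ! i)" "f ` nsets H (4 * n) \<subseteq> {i}"
    using partn_lstE[OF Ram assms] by auto
  then show ?thesis unfolding nsets_def by auto
qed

lemma Mpos: "0 < M" unfolding M_def Kw_def G_def using npos by (intro mult_pos_pos) auto

lemma Npos: "0 < N"
proof -
  have "{} \<in> Pow A" by simp
  then have c: "0 < card (Pow A)" using finA by (auto simp: card_gt_0_iff)
  have "(\<lambda>_. 0) \<in> nsets {..<N} (4 * n) \<rightarrow> {..<card (Pow A)}"
    using c by (simp add: Pi_def)
  from Ram_hom[OF this] obtain H where "H \<subseteq> {..<N}" "card H = M" by blast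
  then have "M \<le> N" using card_mono[of "{..<N}" H] by simp
  then show ?thesis using Mpos by simp
qed

definition "r0 = (SOME r. r \<in> A)"
lemma r0: "r0 \<in> A" unfolding r0_def using nA by (simp add: some_in_eq)

definition "bb c = to_nat (c, r0, replicate (2 * n) (0::nat))"

lemma bb_in: "c < k \<Longrightarrow> bb c \<in> Bv"
  unfolding bb_def Bv_def Carr_def using r0 Npos by auto

lemma bb_inj: "inj bb" unfolding bb_def by (rule injI) simp

definition "BR = bb ` {..<k}"
lemma BR_card: "card BR = k" unfolding BR_def using card_image[of bb "{..<k}"] inj_on_subset[OF bb_inj, of "{..<k}"] by simp
lemma sloB: "slo BR RB"
  by (rule slo_sub[OF loB]) (auto simp: BR_def bb_in)

definition "rkB = rk BR RB"
lemma rkB_img: "rkB ` BR = {..<k}"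
  unfolding rkB_def using slo.rk_image[OF sloB] BR_card by simp

definition "host u = (THE c. c < k \<and> rkB (bb c) = rkA (rep u))"

lemma host: assumes "u \<in> A" shows "host u < k \<and> rkB (bb (host u)) = rkA (rep u)"
proof -
  have "rep u \<in> Reps" using assms unfolding Reps_def by simp
  then have "rkA (rep u) < k" using rkA_img by auto
  then have "rkA (rep u) \<in> rkB ` bb ` {..<k}" using rkB_img unfolding BR_def by simp
  then obtain c where c: "c < k" "rkB (bb c) = rkA (rep u)" by auto
  have "c' = c" if "c' < k" "rkB (bb c') = rkA (rep u)" for c'
  proof -
    have "bb c' \<in> BR" "bb c \<in> BR" using that c unfolding BR_def by auto
    moreover have "rk BR RB (bb c') = rk BR RB (bb c)" using that c unfolding rkB_def by simp
    ultimately have "bb c' = bb c" using inj_onD[OF slo.rk_inj[OF sloB]] by blast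
    then show ?thesis using bb_inj by (meson injD)
  qed
  then have "\<exists>!c. c < k \<and> rkB (bb c) = rkA (rep u)" using c by blast
  then show ?thesis unfolding host_def by (rule theI')
qed

lemma host_same: "(u, v) \<in> SPA \<Longrightarrow> host u = host v"
proof -
  assume a: "(u, v) \<in> SPA"
  then have "rep u = rep v" using rep_eq_iff SPA_A by blast
  then show ?thesis unfolding host_def by simp
qed

lemma host_diff:
  assumes "u \<in> A" "v \<in> A" "(u, v) \<notin> SPA"
  shows "host u \<noteq> host v \<and> ((u, v) \<in> RA \<longleftrightarrow> (bb (host u), bb (host v)) \<in> RB)"
proof -
  have R: "rep u \<in> Reps" "rep v \<in> Reps" using assms unfolding Reps_def by auto
  have hu: "host u < k" "rkB (bb (host u)) = rkA (rep u)" and hv: "host v < k" "rkB (bb (host v)) = rkA (rep v)"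
    using host assms by auto
  have bR: "bb (host u) \<in> BR" "bb (host v) \<in> BR" using hu hv unfolding BR_def by auto
  have "(u, v) \<in> RA \<longleftrightarrow> (rep u, rep v) \<in> RA" using RA_rep assms by simp
  also have "\<dots> \<longleftrightarrow> rkA (rep u) < rkA (rep v)" unfolding rkA_def using slo.rk_iff[OF sloR R] .
  also have "\<dots> \<longleftrightarrow> rkB (bb (host u)) < rkB (bb (host v))" using hu hv by simp
  also have "\<dots> \<longleftrightarrow> (bb (host u), bb (host v)) \<in> RB" unfolding rkB_def using slo.rk_iff[OF sloB bR] by simp
  finally have 1: "(u, v) \<in> RA \<longleftrightarrow> (bb (host u), bb (host v)) \<in> RB" .
  have "rep u \<noteq> rep v" using rep_eq_iff assms by simp
  then have "rkA (rep u) \<noteq> rkA (rep v)" using slo.rk_inj[OF sloR] R unfolding rkA_def by (simp add: inj_on_eq_iff)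
  then have "host u \<noteq> host v" using hu(2) hv(2) by auto
  with 1 show ?thesis by simp
qed


lemma RB_parts:
  assumes "x \<in> Bv" "y \<in> Bv" "fst (from_nat x :: vtx) = c" "fst (from_nat y :: vtx) = c'" "c \<noteq> c'"
    "c < k" "c' < k"
  shows "(x, y) \<in> RB \<longleftrightarrow> (bb c, bb c') \<in> RB"
proof -
  have fb: "fst (from_nat (bb d) :: vtx) = d" for d unfolding bb_def by simp
  have s1: "(x, bb c) \<in> same_part Bv EBv" "(y, bb c') \<in> same_part Bv EBv"
    "(bb c, x) \<in> same_part Bv EBv" "(bb c', y) \<in> same_part Bv EBv"
    using assms bb_in fb unfolding SPB by auto
  have n1: "(x, y) \<notin> same_part Bv EBv" "(bb c, bb c') \<notin> same_part Bv EBv"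
    using assms fb unfolding SPB by auto
  show ?thesis using Kstar_conv[OF KsB s1(1) s1(2) n1(1)] Kstar_conv[OF KsB s1(3) s1(4) n1(2)] by blast
qed

definition evens :: "nat set \<Rightarrow> nat list" where
  "evens U = map (\<lambda>b. sorted_list_of_set U ! (2 * b)) [0..<2 * n]"
definition odds :: "nat set \<Rightarrow> nat list" where
  "odds U = map (\<lambda>b. sorted_list_of_set U ! (2 * b + 1)) [0..<2 * n]"
definition colset :: "nat set \<Rightarrow> nat set" where
  "colset U = {w \<in> A. (to_nat (host w, rep w, evens U), to_nat (host w, rep w, odds U)) \<in> RB}"

definition "hc = (SOME h. bij_betw h (Pow A) {0..<card (Pow A)})"
lemma hc: "bij_betw hc (Pow A) {0..<card (Pow A)}"
  unfolding hc_def using ex_bij_betw_finite_nat[of "Pow A"] finA by (metis finite_Pow_iff someI_ex)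

definition "HH = (SOME H. H \<subseteq> {..<N} \<and> finite H \<and> card H = M \<and> (\<exists>i. (hc \<circ> colset) ` nsets H (4 * n) \<subseteq> {i}))"

lemma HH: "HH \<subseteq> {..<N} \<and> finite HH \<and> card HH = M \<and> (\<exists>i. (hc \<circ> colset) ` nsets HH (4 * n) \<subseteq> {i})"
proof -
  have "(hc \<circ> colset) \<in> nsets {..<N} (4 * n) \<rightarrow> {..<card (Pow A)}"
    using bij_betwE[OF hc] unfolding colset_def by auto
  from Ram_hom[OF this] have "\<exists>H. H \<subseteq> {..<N} \<and> finite H \<and> card H = M \<and> (\<exists>i. (hc \<circ> colset) ` nsets H (4 * n) \<subseteq> {i})"
    by blast
  then show ?thesis unfolding HH_def by (rule someI_ex)
qed

lemma HH_sub: "HH \<subseteq> {..<N}" and HH_fin: "finite HH" and HH_card: "card HH = M" using HH by simp_all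

lemma hom:
  assumes "U \<in> nsets HH (4 * n)" "U' \<in> nsets HH (4 * n)"
  shows "colset U = colset U'"
proof -
  obtain i where i: "(hc \<circ> colset) ` nsets HH (4 * n) \<subseteq> {i}" using HH by blast
  have "hc (colset U) = hc (colset U')" using i assms by auto
  moreover have "colset U \<in> Pow A" "colset U' \<in> Pow A" unfolding colset_def by auto
  ultimately show ?thesis using bij_betw_imp_inj_on[OF hc] by (meson inj_onD)
qed

definition "h i = sorted_list_of_set HH ! i"

lemma h_mono: "i < j \<Longrightarrow> j < M \<Longrightarrow> h i < h j"
proof -
  assume ij: "i < j" "j < M"
  have "sorted_wrt (<) (sorted_list_of_set HH)" by simp
  moreover have "length (sorted_list_of_set HH) = M" using HH_card by simp
  ultimately show ?thesis unfolding h_def using sorted_wrt_nth_less[of "(<)" "sorted_list_of_set HH" i j] ij by simp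
qed

lemma h_in: "i < M \<Longrightarrow> h i \<in> HH"
proof -
  assume i: "i < M"
  have "length (sorted_list_of_set HH) = M" "set (sorted_list_of_set HH) = HH" using HH_fin HH_card by auto
  then show "h i \<in> HH" unfolding h_def using nth_mem[of i "sorted_list_of_set HH"] i by simp
qed

lemma h_lt: "i < M \<Longrightarrow> h i < N" using h_in HH_sub by blast

lemma h_less_iff: "i < M \<Longrightarrow> j < M \<Longrightarrow> h i < h j \<longleftrightarrow> i < j"
proof -
  assume ij: "i < M" "j < M"
  show ?thesis
  proof (cases i j rule: linorder_cases)
    case less then show ?thesis using h_mono ij by simp
  next
    case equal then show ?thesis by simp
  next
    case greater then show ?thesis using h_mono[of j i] ij by simp
  qed
qed

definition "D = colset (h ` {..<4 * n})"

definition "pos u = (if u \<in> D then rk A RA u else rk A (RA\<inverse>) u)"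

lemma sloA: "slo A RA" by (rule slo_sub[OF loA _ finA]) simp
lemma sloA': "slo A (RA\<inverse>)" by (rule slo_conv[OF loA finA])

lemma pos_bound: "u \<in> A \<Longrightarrow> pos u < n"
  unfolding pos_def n_def using slo.rk_bound[OF sloA] slo.rk_bound[OF sloA'] by auto

lemma D_part: "(u, v) \<in> SPA \<Longrightarrow> u \<in> D \<longleftrightarrow> v \<in> D"
proof -
  assume a: "(u, v) \<in> SPA"
  then have "rep u = rep v" "host u = host v" "u \<in> A" "v \<in> A"
    using rep_eq_iff SPA_A host_same by auto
  then show ?thesis unfolding D_def colset_def by auto
qed

lemma pos_inj: "(u, v) \<in> SPA \<Longrightarrow> pos u = pos v \<Longrightarrow> u = v"
proof -
  assume a: "(u, v) \<in> SPA" "pos u = pos v"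
  have uv: "u \<in> A" "v \<in> A" using SPA_A a by auto
  show "u = v"
  proof (cases "u \<in> D")
    case True
    then have "v \<in> D" using D_part a by blast
    then show ?thesis using a True uv inj_onD[OF slo.rk_inj[OF sloA]] unfolding pos_def by auto
  next
    case False
    then have "v \<notin> D" using D_part a by blast
    then show ?thesis using a False uv inj_onD[OF slo.rk_inj[OF sloA']] unfolding pos_def by auto
  qed
qed

lemma pos_mono:
  assumes "(u, v) \<in> SPA"
  shows "u \<in> D \<Longrightarrow> (u, v) \<in> RA \<longleftrightarrow> pos u < pos v"
    and "u \<notin> D \<Longrightarrow> (v, u) \<in> RA \<longleftrightarrow> pos u < pos v"
proof -
  have uv: "u \<in> A" "v \<in> A" using SPA_A assms by auto
  show "u \<in> D \<Longrightarrow> (u, v) \<in> RA \<longleftrightarrow> pos u < pos v"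
    using D_part[OF assms] slo.rk_iff[OF sloA uv] unfolding pos_def by auto
  show "u \<notin> D \<Longrightarrow> (v, u) \<in> RA \<longleftrightarrow> pos u < pos v"
    using D_part[OF assms] slo.rk_iff[OF sloA' uv] unfolding pos_def by auto
qed


lemma sloN: "slo A {(x, y). x < y}"
  unfolding slo_def trans_def using finA by auto

lemma eix_img: "eix ` A = {..<n}"
  unfolding eix_def n_def by (rule slo.rk_image[OF sloN])

lemma eix_inj: "inj_on eix A"
  unfolding eix_def by (rule slo.rk_inj[OF sloN])

lemma eix_bound: "u \<in> A \<Longrightarrow> eix u < n" using eix_img by auto

definition "bl b = inv_into A eix (b div 2)"

lemma bl_in: "b < 2 * n \<Longrightarrow> bl b \<in> A"
  unfolding bl_def using eix_img by (intro inv_into_into) auto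

lemma bl_eix: "l \<in> A \<Longrightarrow> bl (2 * eix l) = l \<and> bl (2 * eix l + 1) = l"
  unfolding bl_def using eix_inj by simp

definition key :: "nat \<Rightarrow> nat \<Rightarrow> nat \<Rightarrow> nat" where
  "key l s u = (if (u, l) \<in> SPA then (2 * pos u + 1) * G + 0 else (2 * pos l + 2 * s) * G + (pos u * n + eix u))"
definition "idx u b = b * Kw + key (bl b) (b mod 2) u"
definition "S u = map (\<lambda>b. h (idx u b)) [0..<2 * n]"
definition "img u = to_nat (host u, rep u, S u)"

lemma Gpos: "0 < G" unfolding G_def by simp

lemma rem_bound: "u \<in> A \<Longrightarrow> pos u * n + eix u < G"
proof -
  assume u: "u \<in> A"
  have "pos u * n + eix u < pos u * n + n" using eix_bound u by simp
  also have "\<dots> = (pos u + 1) * n" by simp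
  also have "\<dots> \<le> n * n" using pos_bound[OF u] by (intro mult_le_mono1) simp
  finally show ?thesis unfolding G_def by simp
qed

lemma key_bound:
  assumes "u \<in> A" "l \<in> A" "s < 2"
  shows "key l s u < Kw"
proof (cases "(u, l) \<in> SPA")
  case True
  have "(2 * pos u + 1) * G + 0 < (2 * n + 3) * G + 0"
    using pos_bound[OF assms(1)] Gpos by (subst mult_add_less_iff) auto
  then show ?thesis using True unfolding key_def Kw_def by simp
next
  case False
  have "(2 * pos l + 2 * s) * G + (pos u * n + eix u) < (2 * n + 3) * G + 0"
    using pos_bound[OF assms(2)] Gpos rem_bound[OF assms(1)] assms(3) by (subst mult_add_less_iff) auto
  then show ?thesis using False unfolding key_def Kw_def by simp
qed

lemma idx_bound:
  assumes "u \<in> A" "b < 2 * n"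
  shows "idx u b < M"
proof -
  have "key (bl b) (b mod 2) u < Kw" using key_bound assms bl_in by simp
  then have "idx u b < b * Kw + Kw" unfolding idx_def by simp
  also have "\<dots> = (b + 1) * Kw" by simp
  also have "\<dots> \<le> 2 * n * Kw" using assms(2) by (intro mult_le_mono1) simp
  finally show ?thesis unfolding M_def .
qed

lemma S_len: "length (S u) = 2 * n" unfolding S_def by simp
lemma S_nth: "b < 2 * n \<Longrightarrow> S u ! b = h (idx u b)" unfolding S_def by simp

lemma S_set: "u \<in> A \<Longrightarrow> set (S u) \<subseteq> {..<N}"
  unfolding S_def using h_lt idx_bound by auto

lemma img_in: "u \<in> A \<Longrightarrow> img u \<in> Bv \<and> from_nat (img u) = (host u, rep u, S u)"
  unfolding img_def Bv_def Carr_def using host rep_in S_len S_set by auto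

lemma key_same:
  assumes "(u, v) \<in> SPA" "pos u < pos v" "l \<in> A" "s < 2"
  shows "key l s u < key l s v"
proof (cases "(u, l) \<in> SPA")
  case True
  then have "(v, l) \<in> SPA" using assms SPA_sym SPA_trans by blast
  moreover have "(2 * pos u + 1) * G + 0 < (2 * pos v + 1) * G + 0"
    using assms Gpos by (subst mult_add_less_iff) auto
  ultimately show ?thesis using True unfolding key_def by simp
next
  case False
  then have "(v, l) \<notin> SPA" using assms SPA_sym SPA_trans by blast
  have uA: "u \<in> A" "v \<in> A" using SPA_A assms by auto
  have "pos u * n + eix u < pos u * n + n" using eix_bound uA by simp
  also have "\<dots> = (pos u + 1) * n" by simp
  also have "\<dots> \<le> pos v * n" using assms(2) by (intro mult_le_mono1) simp
  also have "\<dots> \<le> pos v * n + eix v" by simp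
  finally show ?thesis using False \<open>(v, l) \<notin> SPA\<close> unfolding key_def by simp
qed


lemma idx_lt_next:
  assumes "u \<in> A" "v \<in> A" "b < b'" "b' < 2 * n"
  shows "idx u b < idx v b'"
proof -
  have "key (bl b) (b mod 2) u < Kw" using key_bound assms bl_in by simp
  then have "idx u b < (b + 1) * Kw" unfolding idx_def by simp
  also have "\<dots> \<le> b' * Kw" using assms(3) by (intro mult_le_mono1) simp
  also have "\<dots> \<le> idx v b'" unfolding idx_def by simp
  finally show ?thesis .
qed

lemma idx_same:
  assumes "(u, v) \<in> SPA" "pos u < pos v" "b < 2 * n"
  shows "idx u b < idx v b"
  using key_same[OF assms(1,2) bl_in[OF assms(3)]] unfolding idx_def by simp

definition "gi u v j = (if even j then idx u (j div 2) else idx v (j div 2))"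

lemma gi_mono:
  assumes "(u, v) \<in> SPA" "pos u < pos v" "j < j'" "j' < 4 * n"
  shows "gi u v j < gi u v j'"
proof -
  have uA: "u \<in> A" "v \<in> A" using SPA_A assms by auto
  show ?thesis
  proof (cases "j div 2 < j' div 2")
    case True
    then show ?thesis unfolding gi_def using idx_lt_next uA assms by auto
  next
    case False
    then have "j div 2 = j' div 2" using assms(3) by (simp add: div_le_mono leD le_neq_implies_less)
    then have "even j" "odd j'" using assms(3) by presburger+
    then show ?thesis unfolding gi_def using idx_same assms \<open>j div 2 = j' div 2\<close> by auto
  qed
qed

lemma gi_bound: "(u, v) \<in> SPA \<Longrightarrow> j < 4 * n \<Longrightarrow> gi u v j < M"
  unfolding gi_def using idx_bound SPA_A by auto

definition "UU u v = (\<lambda>j. h (gi u v j)) ` {..<4 * n}"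

lemma UU_sorted:
  assumes "(u, v) \<in> SPA" "pos u < pos v"
  shows "sorted_list_of_set (UU u v) = map (\<lambda>j. h (gi u v j)) [0..<4 * n]"
  unfolding UU_def
  by (rule sorted_list_of_set_strict_mono) (use gi_mono[OF assms] gi_bound[OF assms(1)] h_mono in auto)

lemma UU_evens_odds:
  assumes "(u, v) \<in> SPA" "pos u < pos v"
  shows "evens (UU u v) = S u" "odds (UU u v) = S v"
  unfolding evens_def odds_def S_def UU_sorted[OF assms] gi_def by auto

lemma UU_nsets:
  assumes "(u, v) \<in> SPA" "pos u < pos v"
  shows "UU u v \<in> nsets HH (4 * n)"
proof -
  have "inj_on (\<lambda>j. h (gi u v j)) {..<4 * n}"
  proof (rule inj_onI)
    fix j j' assume "j \<in> {..<4 * n}" "j' \<in> {..<4 * n}" "h (gi u v j) = h (gi u v j')"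
    then show "j = j'"
      using gi_mono[OF assms, of j j'] gi_mono[OF assms, of j' j] gi_bound[OF assms(1)] h_mono
      by (metis lessThan_iff linorder_neqE_nat order_less_irrefl)
  qed
  then have "card (UU u v) = 4 * n" unfolding UU_def by (simp add: card_image)
  moreover have "UU u v \<subseteq> HH" unfolding UU_def using h_in gi_bound[OF assms(1)] by auto
  ultimately show ?thesis unfolding nsets_def UU_def by auto
qed

lemma M_ge: "4 * n \<le> M"
proof -
  have "(2 * n + 3) * 1 \<le> (2 * n + 3) * (n * n + 1)" by (intro mult_le_mono2) simp
  then have "2 \<le> Kw" unfolding Kw_def G_def by simp
  then have "2 * n * 2 \<le> 2 * n * Kw" by (intro mult_le_mono2)
  then show ?thesis unfolding M_def by simp
qed

lemma D_nsets: "h ` {..<4 * n} \<in> nsets HH (4 * n)"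
proof -
  have "inj_on h {..<4 * n}"
    using h_mono M_ge by (intro inj_onI) (metis lessThan_iff linorder_neqE_nat order_less_irrefl order_less_le_trans)
  then have "card (h ` {..<4 * n}) = 4 * n" by (simp add: card_image)
  moreover have "h ` {..<4 * n} \<subseteq> HH" using h_in M_ge by auto
  ultimately show ?thesis unfolding nsets_def by auto
qed

lemma same_part_RB:
  assumes "(u, v) \<in> SPA" "pos u < pos v"
  shows "(img u, img v) \<in> RB \<longleftrightarrow> u \<in> D"
proof -
  have "colset (UU u v) = D" unfolding D_def using hom[OF UU_nsets[OF assms] D_nsets] .
  moreover have "host v = host u" "rep v = rep u" using host_same assms rep_eq_iff SPA_A by metis+
  moreover have "u \<in> A" using SPA_A assms by auto
  ultimately show ?thesis unfolding colset_def img_def UU_evens_odds[OF assms] by auto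
qed


lemma decode_iff:
  assumes uv: "u \<in> A" "v \<in> A" "(u, v) \<notin> SPA" and l: "l \<in> cls u"
  shows "dcond l (S u) (S v) \<longleftrightarrow> l = u"
proof -
  have ul: "(u, l) \<in> SPA" using l unfolding cls_def by simp
  then have lA: "l \<in> A" using SPA_A by blast
  have vl: "(v, l) \<notin> SPA" using ul uv SPA_sym SPA_trans by blast
  define b where "b = 2 * eix l"
  have b: "b < 2 * n" "b + 1 < 2 * n" using eix_bound[OF lA] unfolding b_def by auto
  have blb: "bl b = l" "bl (b + 1) = l" "b mod 2 = 0" "(b + 1) mod 2 = 1"
    using bl_eix[OF lA] unfolding b_def by auto
  have "dcond l (S u) (S v) \<longleftrightarrow> h (idx v b) < h (idx u b) \<and> h (idx u (b + 1)) < h (idx v (b + 1))"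
    unfolding dcond_def b_def[symmetric] using b S_nth by simp
  also have "\<dots> \<longleftrightarrow> idx v b < idx u b \<and> idx u (b + 1) < idx v (b + 1)"
    using h_less_iff idx_bound uv b by simp
  also have "\<dots> \<longleftrightarrow> key l 0 v < key l 0 u \<and> key l 1 u < key l 1 v"
    unfolding idx_def blb by simp
  also have "\<dots> \<longleftrightarrow> (2 * pos l + 0) * G + (pos v * n + eix v) < (2 * pos u + 1) * G + 0
      \<and> (2 * pos u + 1) * G + 0 < (2 * pos l + 2) * G + (pos v * n + eix v)"
    unfolding key_def using ul vl by simp
  also have "\<dots> \<longleftrightarrow> pos l = pos u"
  proof -
    let ?r = "pos v * n + eix v"
    have r: "?r < G" using rem_bound[OF uv(2)] .
    have e1: "(2 * pos l + 0) * G + ?r < (2 * pos u + 1) * G + 0 \<longleftrightarrow>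
        2 * pos l + 0 < 2 * pos u + 1 \<or> (2 * pos l + 0 = 2 * pos u + 1 \<and> ?r < 0)"
      by (rule mult_add_less_iff[OF r Gpos])
    have e2: "(2 * pos u + 1) * G + 0 < (2 * pos l + 2) * G + ?r \<longleftrightarrow>
        2 * pos u + 1 < 2 * pos l + 2 \<or> (2 * pos u + 1 = 2 * pos l + 2 \<and> 0 < ?r)"
      by (rule mult_add_less_iff[OF Gpos r])
    show ?thesis unfolding e1 e2 by presburger
  qed
  also have "\<dots> \<longleftrightarrow> l = u" using pos_inj ul SPA_sym by blast
  finally show ?thesis .
qed

lemma decode:
  assumes uv: "u \<in> A" "v \<in> A" "(u, v) \<notin> SPA"
  shows "ok (rep u) (S u) (S v) \<and> dec (rep u) (S u) (S v) = u"
proof -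
  have c: "cls (rep u) = cls u" using cls_eq SPA_rep SPA_sym uv by metis
  have P: "(l \<in> cls (rep u) \<and> dcond l (S u) (S v)) \<longleftrightarrow> l = u" for l
    using decode_iff[OF uv] cls_self[OF uv(1)] unfolding c by blast
  then show ?thesis unfolding ok_def dec_def by simp
qed

lemma slo_asym: "(x, y) \<in> RB \<Longrightarrow> (y, x) \<notin> RB"
  using loB unfolding strict_linear_order_on_def trans_def by blast
lemma slo_asymA: "(x, y) \<in> RA \<Longrightarrow> (y, x) \<notin> RA"
  using loA unfolding strict_linear_order_on_def trans_def by blast

lemma S_diff:
  assumes "(u, v) \<in> SPA" "pos u < pos v"
  shows "S u \<noteq> S v"
proof -
  have "S u ! 0 < S v ! 0"
    using S_nth[of 0] npos idx_same[OF assms, of 0] h_mono idx_bound SPA_A assms by auto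
  then show ?thesis by auto
qed

lemma img_diff_same:
  assumes "(u, v) \<in> SPA" "u \<noteq> v"
  shows "img u \<noteq> img v"
proof -
  have "pos u \<noteq> pos v" using pos_inj assms by blast
  then have "S u \<noteq> S v" using S_diff assms SPA_sym by (metis linorder_neqE_nat)
  then show ?thesis unfolding img_def by simp
qed

lemma RB_same:
  assumes "(u, v) \<in> SPA"
  shows "(u, v) \<in> RA \<longleftrightarrow> (img u, img v) \<in> RB"
proof (cases "u = v")
  case True
  then show ?thesis using slo_asym slo_asymA by blast
next
  case False
  have uA: "u \<in> A" "v \<in> A" using SPA_A assms by auto
  have vu: "(v, u) \<in> SPA" using SPA_sym assms by blast
  have ne: "img u \<noteq> img v" using img_diff_same assms False by blast
  have tot: "(img u, img v) \<in> RB \<or> (img v, img u) \<in> RB"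
    using loB ne img_in uA unfolding strict_linear_order_on_def by blast
  have totA: "(u, v) \<in> RA \<or> (v, u) \<in> RA"
    using loA False uA unfolding strict_linear_order_on_def by blast
  have "pos u \<noteq> pos v" using pos_inj assms False by blast
  then consider "pos u < pos v" | "pos v < pos u" by linarith
  then show ?thesis
  proof cases
    case 1
    show ?thesis
    proof (cases "u \<in> D")
      case True
      then show ?thesis using pos_mono(1)[OF assms] same_part_RB[OF assms 1] 1 by simp
    next
      case False
      then show ?thesis using pos_mono(2)[OF assms] same_part_RB[OF assms 1] 1 slo_asymA by blast
    qed
  next
    case 2
    have vD: "v \<in> D \<longleftrightarrow> u \<in> D" using D_part[OF vu] .
    show ?thesis
    proof (cases "v \<in> D")
      case True
      then show ?thesis using pos_mono(1)[OF vu] same_part_RB[OF vu 2] 2 slo_asym slo_asymA by blast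
    next
      case False
      then show ?thesis using pos_mono(2)[OF vu] same_part_RB[OF vu 2] 2 tot by blast
    qed
  qed
qed

lemma embedding_img: "embedding img A EA RA Bv EBv RB"
  unfolding embedding_def
proof (intro conjI ballI)
  show "img ` A \<subseteq> Bv" using img_in by auto
  show "inj_on img A"
  proof (rule inj_onI)
    fix u v assume uv: "u \<in> A" "v \<in> A" "img u = img v"
    then have "host u = host v" "rep u = rep v" unfolding img_def by auto
    then have "(u, v) \<in> SPA" using rep_eq_iff uv by blast
    then show "u = v" using img_diff_same uv by blast
  qed
next
  fix u v assume uv: "u \<in> A" "v \<in> A"
  show "(u, v) \<in> EA \<longleftrightarrow> (img u, img v) \<in> EBv"
  proof (cases "(u, v) \<in> SPA")
    case True
    then have "host u = host v" using host_same by blast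
    then show ?thesis using Komega_noE[OF KA True] img_in uv unfolding EBv_def by auto
  next
    case False
    have vu: "(v, u) \<notin> SPA" using False SPA_sym by blast
    have "(rep u, rep v) \<notin> SPA"
      using False SPA_rep SPA_sym SPA_trans uv by metis
    then have "edg (host u, rep u, S u) (host v, rep v, S v) \<longleftrightarrow> (u, v) \<in> EA"
      using host_diff[OF uv False] decode[OF uv False] decode[OF uv(2,1) vu] by simp
    then show ?thesis using img_in uv unfolding EBv_def by auto
  qed
  show "(u, v) \<in> RA \<longleftrightarrow> (img u, img v) \<in> RB"
  proof (cases "(u, v) \<in> SPA")
    case True
    then show ?thesis by (rule RB_same)
  next
    case False
    have hd: "host u \<noteq> host v" "host u < k" "host v < k" using host_diff[OF uv False] host uv by auto
    have "(img u, img v) \<in> RB \<longleftrightarrow> (bb (host u), bb (host v)) \<in> RB"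
      using RB_parts[OF _ _ _ _ hd] img_in uv by auto
    then show ?thesis using host_diff[OF uv False] by simp
  qed
qed

end


theorem theorem8p5:
  shows "expansion_property (K_omega :: nat set \<Rightarrow> _) K_omega_star"
  unfolding expansion_property_def
proof (intro allI impI)
  fix A :: "nat set" and EA assume KA: "K_omega A EA"
  show "\<exists>(B :: nat set) EB. K_omega B EB \<and> (\<forall>RA RB. K_omega_star A EA RA \<and> K_omega_star B EB RB \<longrightarrow>
           (\<exists>f. embedding f A EA RA B EB RB))"
  proof (cases "A = {}")
    case True
    show ?thesis
    proof (intro exI[of _ "{} :: nat set"] exI[of _ "{} :: (nat \<times> nat) set"] conjI allI impI)
      show "K_omega ({} :: nat set) {}"
        unfolding K_omega_def digraph_def same_part_def equiv_def refl_on_def sym_def trans_def by simp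
      fix RA RB :: "(nat \<times> nat) set"
      show "\<exists>f. embedding f A EA RA {} {} RB"
        by (rule exI[of _ "id :: nat \<Rightarrow> nat"]) (simp add: embedding_def True)
    qed
  next
    case False
    define MM where "MM = 2 * card A * ((2 * card A + 3) * (card A * card A + 1))"
    obtain N :: nat where Ram: "partn_lst {..<N} (replicate (card (Pow A)) MM) (4 * card A)"
      using ramsey_full[of "replicate (card (Pow A)) MM" "4 * card A"] by blast
    interpret cons A EA N by unfold_locales (rule KA)
    have MM: "M = MM" unfolding M_def Kw_def G_def n_def MM_def ..
    show ?thesis
    proof (intro exI[of _ Bv] exI[of _ EBv] conjI allI impI)
      show "K_omega Bv EBv" by (rule K_B)
      fix RA RB :: "(nat \<times> nat) set" assume R: "K_omega_star A EA RA \<and> K_omega_star Bv EBv RB"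
      interpret emb A EA N RA RB
        by unfold_locales (use R False Ram in \<open>auto simp: MM n_def\<close>)
      show "\<exists>f. embedding f A EA RA Bv EBv RB" using embedding_img by blast
    qed
  qed
qed

end
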